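(* Let $n\ge 3$ and consider the cycle $C_n$ with an arbitrary initial coloring. In the Majority Model (MM): if $n$ is odd, the process always reaches a stable coloring; if $n$ is even, the process reaches a stable coloring or the blinking configuration. In the Random Majority Model (RMM): if $n$ is odd, the process (almost surely) reaches the all-white or the all-blue coloring; if $n$ is even, the process reaches the all-white coloring, the all-blue coloring, or the blinking configuration.
   Context: A coloring is a map from the nodes to $\{b,w\}$. In MM, all nodes update simultaneously: a node adopts the color strictly more frequent among its neighbors in the previous round and keeps its color in case of a tie. RMM is the same except that in case of a tie the node chooses blue or white independently and uniformly at random. A coloring is stable if one application of the update rule deterministically returns the same coloring. For even $n$, the two alternating colorings are those in which every two adjacent nodes of $C_n$ have different colors; the process is in the blinking configuration when it is in one of them (it then switches between the two forever). *)

theory Defs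
  imports "HOL-Probability.Probability"
begin

datatype color = Blue | White

type_synonym coloring = "nat \<Rightarrow> color"

text \<open>The cycle C_n has nodes 0..n-1; node i is adjacent to (i+1) mod n and (i+n-1) mod n.
  Values of a coloring at indices \<ge> n are irrelevant and are kept unchanged by the updates.\<close>

definition nbrs :: "nat \<Rightarrow> nat \<Rightarrow> nat list" where
  "nbrs n i = [(i + n - 1) mod n, (i + 1) mod n]"

definition cnt :: "nat \<Rightarrow> coloring \<Rightarrow> nat \<Rightarrow> color \<Rightarrow> nat" where
  "cnt n c i x = length (filter (\<lambda>j. c j = x) (nbrs n i))"

definition mm_step :: "nat \<Rightarrow> coloring \<Rightarrow> coloring" where
  "mm_step n c = (\<lambda>i. if i < n then
       (if cnt n c i Blue > cnt n c i White then Blue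
        else if cnt n c i White > cnt n c i Blue then White
        else c i)
     else c i)"

definition rmm_step :: "nat \<Rightarrow> coloring \<Rightarrow> (nat \<Rightarrow> bool) \<Rightarrow> coloring" where
  "rmm_step n c coin = (\<lambda>i. if i < n then
       (if cnt n c i Blue > cnt n c i White then Blue
        else if cnt n c i White > cnt n c i Blue then White
        else if coin i then Blue else White)
     else c i)"

fun rmm_traj :: "nat \<Rightarrow> coloring \<Rightarrow> (nat \<times> nat \<Rightarrow> bool) \<Rightarrow> nat \<Rightarrow> coloring" where
  "rmm_traj n c \<omega> 0 = c"
| "rmm_traj n c \<omega> (Suc t) = rmm_step n (rmm_traj n c \<omega> t) (\<lambda>i. \<omega> (t, i))"

definition coins :: "(nat \<times> nat \<Rightarrow> bool) measure" where
  "coins = PiM UNIV (\<lambda>_. measure_pmf (bernoulli_pmf (1/2)))"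

definition stable :: "nat \<Rightarrow> coloring \<Rightarrow> bool" where
  "stable n c \<longleftrightarrow> (\<forall>i<n. mm_step n c i = c i)"

definition alternating :: "nat \<Rightarrow> coloring \<Rightarrow> bool" where
  "alternating n c \<longleftrightarrow> (\<forall>i<n. c ((i + 1) mod n) \<noteq> c i)"

definition monochrome :: "nat \<Rightarrow> color \<Rightarrow> coloring \<Rightarrow> bool" where
  "monochrome n x c \<longleftrightarrow> (\<forall>i<n. c i = x)"

end

theory Submission
  imports Defs
begin


definition pr :: "nat \<Rightarrow> nat \<Rightarrow> nat" where "pr n i = (i + n - 1) mod n"
definition sc :: "nat \<Rightarrow> nat \<Rightarrow> nat" where "sc n i = (i + 1) mod n"

lemma color_cases3: "(x::color) \<noteq> y \<Longrightarrow> x \<noteq> z \<Longrightarrow> y = z"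
  by (cases x; cases y; cases z) auto

lemma pr_lt: "n \<ge> 3 \<Longrightarrow> pr n i < n" by (simp add: pr_def)
lemma sc_lt: "n \<ge> 3 \<Longrightarrow> sc n i < n" by (simp add: sc_def)

lemma pr_sc: assumes "n \<ge> 3" "i < n" shows "pr n (sc n i) = i"
proof (cases "i + 1 < n")
  case True then show ?thesis unfolding pr_def sc_def using assms by simp
next
  case False then have "i = n - 1" using assms by simp
  then show ?thesis unfolding pr_def sc_def using assms by simp
qed

lemma sc_pr: assumes "n \<ge> 3" "i < n" shows "sc n (pr n i) = i"
proof (cases "i = 0")
  case True then show ?thesis unfolding pr_def sc_def using assms by simp
next
  case False
  then have e: "i + n - 1 = (i - 1) + n" by simp
  have "(i - 1) < n" using assms by simp
  then have "(i + n - 1) mod n = i - 1" unfolding e by simp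
  then show ?thesis unfolding pr_def sc_def using assms False by simp
qed

lemma mm_eq: assumes "n \<ge> 3" "i < n"
  shows "mm_step n c i = (if c (pr n i) = c (sc n i) then c (pr n i) else c i)"
  using assms unfolding mm_step_def cnt_def nbrs_def pr_def[symmetric] sc_def[symmetric]
  by (cases "c (pr n i)"; cases "c (sc n i)") auto

definition allstep :: "nat \<Rightarrow> coloring \<Rightarrow> coloring" where
  "allstep n c = rmm_step n c (\<lambda>_. True)"

lemma all_eq: assumes "n \<ge> 3" "i < n"
  shows "allstep n c i = (if c (pr n i) = White \<and> c (sc n i) = White then White else Blue)"
  using assms unfolding allstep_def rmm_step_def cnt_def nbrs_def pr_def[symmetric] sc_def[symmetric]
  by (cases "c (pr n i)"; cases "c (sc n i)") auto

lemma rmm_step_all: "(\<And>i. i < n \<Longrightarrow> coin i) \<Longrightarrow> rmm_step n c coin = allstep n c"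
  unfolding allstep_def rmm_step_def by (rule ext) auto



definition good :: "nat \<Rightarrow> coloring \<Rightarrow> nat \<Rightarrow> bool" where
  "good n c i \<longleftrightarrow> c (pr n i) = c i \<or> c (sc n i) = c i"

definition G :: "nat \<Rightarrow> coloring \<Rightarrow> nat" where
  "G n c = card {i. i < n \<and> good n c i}"

lemma G_le: "G n c \<le> n"
proof -
  have "{i. i < n \<and> good n c i} \<subseteq> {..<n}" by auto
  then show ?thesis unfolding G_def using card_mono[of "{..<n}"] by fastforce
qed

lemma L1: "n \<ge> 3 \<Longrightarrow> i < n \<Longrightarrow> good n c i \<Longrightarrow> mm_step n c i = c i"
  by (auto simp: mm_eq good_def)

lemma L2: assumes "n \<ge> 3" "i < n" "good n c i" shows "good n (mm_step n c) i"
proof -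
  have mi: "mm_step n c i = c i" using L1 assms .
  show ?thesis
  proof (cases "c (sc n i) = c i")
    case True
    have "good n c (sc n i)" using True pr_sc[OF assms(1,2)] unfolding good_def by simp
    then have "mm_step n c (sc n i) = c (sc n i)" using L1 sc_lt assms by blast
    then show ?thesis using mi True unfolding good_def by simp
  next
    case False
    then have T: "c (pr n i) = c i" using assms(3) unfolding good_def by simp
    have "good n c (pr n i)" using T sc_pr[OF assms(1,2)] unfolding good_def by simp
    then have "mm_step n c (pr n i) = c (pr n i)" using L1 pr_lt assms by blast
    then show ?thesis using mi T unfolding good_def by simp
  qed
qed

lemma L3: assumes "n \<ge> 3" "i < n" "\<not> good n c i" "good n c (sc n i)" shows "good n (mm_step n c) i"
proof -
  have e: "c (pr n i) = c (sc n i)" using assms(3) color_cases3 unfolding good_def by metis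
  have mi: "mm_step n c i = c (sc n i)" using mm_eq[OF assms(1,2)] e by simp
  have "mm_step n c (sc n i) = c (sc n i)" using L1 sc_lt assms by blast
  then show ?thesis using mi unfolding good_def by simp
qed

lemma sc_iter: "n \<ge> 3 \<Longrightarrow> sc n ((j + m) mod n) = (j + Suc m) mod n"
  unfolding sc_def by (simp add: mod_Suc_eq)

lemma bad_spread: assumes "n \<ge> 3" "\<forall>k<n. \<not> good n c k \<longrightarrow> \<not> good n c (sc n k)"
  "j < n" "\<not> good n c j" shows "\<not> good n c ((j + m) mod n)"
proof (induction m)
  case 0 then show ?case using assms by simp
next
  case (Suc m)
  then show ?case using assms(2) sc_iter[OF assms(1), of j m] assms(1) by (metis mod_less_divisor order_less_le_trans zero_less_numeral)
qed

lemma mm_main: assumes "n \<ge> 3"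
  shows "\<exists>t. stable n ((mm_step n ^^ t) c) \<or> alternating n ((mm_step n ^^ t) c)"
proof (induction c rule: measure_induct_rule[of "\<lambda>c. n - G n c"])
  case (less c)
  show ?case
  proof (cases "\<forall>i<n. good n c i")
    case True
    then have "stable n c" unfolding stable_def using L1 assms by blast
    then show ?thesis by (metis funpow_0)
  next
    case nT: False
    show ?thesis
    proof (cases "\<forall>i<n. \<not> good n c i")
      case True
      have "alternating n c" unfolding alternating_def
      proof (intro allI impI)
        fix i assume "i < n"
        then have "c (sc n i) \<noteq> c i" using True unfolding good_def by blast
        then show "c ((i + 1) mod n) \<noteq> c i" unfolding sc_def .
      qed
      then show ?thesis by (metis funpow_0)
    next
      case False
      then obtain i where i: "i < n" "good n c i" by blast
      from nT obtain j where j: "j < n" "\<not> good n c j" by blast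
      have "\<exists>k<n. \<not> good n c k \<and> good n c (sc n k)"
      proof (rule ccontr)
        assume "\<not> ?thesis"
        then have "\<forall>k<n. \<not> good n c k \<longrightarrow> \<not> good n c (sc n k)" by blast
        from bad_spread[OF assms this j, of "i + n - j"] have "\<not> good n c ((j + (i + n - j)) mod n)" .
        moreover have "(j + (i + n - j)) mod n = i" using i j by simp
        ultimately show False using i by simp
      qed
      then obtain k where k: "k < n" "\<not> good n c k" "good n c (sc n k)" by blast
      have sub: "{i. i < n \<and> good n c i} \<subset> {i. i < n \<and> good n (mm_step n c) i}"
        using L2[OF assms] L3[OF assms k] k by blast
      have "G n c < G n (mm_step n c)" unfolding G_def
        by (rule psubset_card_mono[OF _ sub]) auto
      then have "n - G n (mm_step n c) < n - G n c" using G_le[of n "mm_step n c"] by linarith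
      from less[OF this] obtain t where
        "stable n ((mm_step n ^^ t) (mm_step n c)) \<or> alternating n ((mm_step n ^^ t) (mm_step n c))" by blast
      moreover have "(mm_step n ^^ Suc t) c = (mm_step n ^^ t) (mm_step n c)"
        by (simp only: funpow_Suc_right comp_apply)
      ultimately show ?thesis by metis
    qed
  qed
qed

lemma alt_odd: assumes "n \<ge> 3" "odd n" "alternating n d" shows False
proof -
  have "\<forall>i<n. d i = (if even i then d 0 else d 1)"
  proof (intro allI impI)
    fix i show "i < n \<Longrightarrow> d i = (if even i then d 0 else d 1)"
    proof (induction i)
      case 0 then show ?case by simp
    next
      case (Suc i)
      have m: "(i + 1) mod n = Suc i" using Suc.prems by simp
      have a: "d (Suc i) \<noteq> d i" using assms(3) Suc.prems m unfolding alternating_def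
        by (metis Suc_lessD)
      have m1: "(0 + 1) mod n = (1::nat)" using assms(1) by simp
      have b: "d 1 \<noteq> d 0" using assms(3,1) m1 unfolding alternating_def
        by (metis le_less_trans less_numeral_extra(4) not_less_iff_gr_or_eq zero_less_numeral)
      have ih: "d i = (if even i then d 0 else d 1)" using Suc by simp
      show ?case
      proof (cases "even i")
        case True
        then show ?thesis using ih a b color_cases3[of "d i" "d (Suc i)" "d 1"] by simp
      next
        case False
        then show ?thesis using ih a b color_cases3[of "d i" "d (Suc i)" "d 0"] by simp
      qed
    qed
  qed
  then have x0: "d (n - 1) = (if even (n - 1) then d 0 else d 1)" using assms(1) by simp
  have "even (n - 1)" using assms(1,2) by simp
  then have x: "d (n - 1) = d 0" using x0 by simp
  have "n - 1 < n" using assms(1) by simp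
  then have "d ((n - 1 + 1) mod n) \<noteq> d (n - 1)" using assms(3) unfolding alternating_def by blast
  moreover have "(n - 1 + 1) mod n = 0" using assms(1) by simp
  ultimately have "d 0 \<noteq> d (n - 1)" by simp
  then show False using x by simp
qed



definition absorbed :: "nat \<Rightarrow> coloring \<Rightarrow> bool" where
  "absorbed n c \<longleftrightarrow> monochrome n White c \<or> monochrome n Blue c \<or> alternating n c"

definition Wset :: "nat \<Rightarrow> coloring \<Rightarrow> nat set" where
  "Wset n c = {i. i < n \<and> c i = White}"

lemma not_white: "(x::color) \<noteq> White \<longleftrightarrow> x = Blue" by (cases x) auto

lemma two_step: assumes "n \<ge> 3" "i < n"
  shows "allstep n (allstep n c) i = White \<longleftrightarrow>
     c (pr n (pr n i)) = White \<and> c i = White \<and> c (sc n (sc n i)) = White"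
proof -
  have p: "pr n i < n" "sc n i < n" using assms pr_lt sc_lt by auto
  show ?thesis
    using all_eq[OF assms(1) p(1), of c] all_eq[OF assms(1) p(2), of c] all_eq[OF assms, of "allstep n c"]
      sc_pr[OF assms] pr_sc[OF assms]
    by (auto split: if_splits)
qed

lemma sc2: "n \<ge> 3 \<Longrightarrow> sc n (sc n i) = (i + 2) mod n"
  unfolding sc_def by (simp add: mod_Suc_eq)

lemma iter2: fixes n k :: nat assumes "n \<ge> 3" "\<forall>i<n. c i = White \<longrightarrow> c ((i + 2) mod n) = White" "i < n" "c i = White"
  shows "c ((i + 2 * k) mod n) = White"
proof (induction k)
  case 0 then show ?case using assms by simp
next
  case (Suc k)
  have "(i + 2 * k) mod n < n" using assms(1) by simp
  then have "c (((i + 2 * k) mod n + 2) mod n) = White" using assms(2) Suc by blast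
  moreover have "((i + 2 * k) mod n + 2) mod n = (i + 2 * k + 2) mod n"
    by (rule mod_add_left_eq)
  moreover have "i + 2 * k + 2 = i + 2 * Suc k" by simp
  ultimately show ?case by simp
qed

lemma closure_absorbed: assumes "n \<ge> 3" "\<forall>i<n. c i = White \<longrightarrow> c ((i + 2) mod n) = White"
  shows "absorbed n c"
proof (cases "odd n")
  case True
  show ?thesis
  proof (cases "\<exists>i<n. c i = White")
    case True
    then obtain i where i: "i < n" "c i = White" by blast
    have step1: "c ((j + 1) mod n) = White" if "j < n" "c j = White" for j
    proof -
      have "c ((j + 2 * ((n + 1) div 2)) mod n) = White" using iter2[OF assms that] .
      moreover have "j + 2 * ((n + 1) div 2) = (j + 1) + n" using \<open>odd n\<close> by simp
      moreover have "((j + 1) + n) mod n = (j + 1) mod n" by (rule mod_add_self2)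
      ultimately show ?thesis by metis
    qed
    have allm: "c ((i + m) mod n) = White" for m
    proof (induction m)
      case 0 then show ?case using i by simp
    next
      case (Suc m)
      have "(i + m) mod n < n" using assms(1) by simp
      from step1[OF this Suc] show ?case by (simp add: mod_Suc_eq)
    qed
    have "monochrome n White c" unfolding monochrome_def
    proof (intro allI impI)
      fix j assume j: "j < n"
      have "(i + (j + n - i)) mod n = j" using i j by simp
      then show "c j = White" using allm[of "j + n - i"] by simp
    qed
    then show ?thesis unfolding absorbed_def by simp
  next
    case False
    then have "monochrome n Blue c" unfolding monochrome_def using not_white by blast
    then show ?thesis unfolding absorbed_def by simp
  qed
next
  case False
  then obtain h where h: "n = 2 * h" by (metis oddE evenE)
  have par: "c i = c (i mod 2)" if "i < n" for i
  proof -
    obtain q r where qr: "i = 2 * q + r" "r = i mod 2" by (metis mod_mult_div_eq add.commute)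
    have r2: "r < 2" using qr by simp
    have rn: "r < n" using assms(1) r2 by simp
    have "q < h" using qr that h by simp
    have "c i = White \<longleftrightarrow> c r = White"
    proof
      assume ci: "c i = White"
      have "c ((i + 2 * (h - q)) mod n) = White" using iter2[OF assms that ci] .
      moreover have "i + 2 * (h - q) = n + r" using qr h \<open>q < h\<close> by simp
      ultimately show "c r = White" using rn by simp
    next
      assume cr: "c r = White"
      have "c ((r + 2 * q) mod n) = White" using iter2[OF assms rn cr] .
      moreover have "r + 2 * q = i" using qr by simp
      ultimately show "c i = White" using that by simp
    qed
    then show ?thesis using qr not_white by (metis color.exhaust)
  qed
  have n0: "0 < n" and n1: "1 < n" using assms(1) by auto
  show ?thesis
  proof (cases "c 0 = c 1")
    case True
    have "\<forall>i<n. c i = c 0"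
    proof (intro allI impI)
      fix i assume "i < n"
      then have "c i = c (i mod 2)" by (rule par)
      then show "c i = c 0" using True by (cases "even i") (auto simp: odd_iff_mod_2_eq_one even_iff_mod_2_eq_zero)
    qed
    then have "monochrome n (c 0) c" unfolding monochrome_def by blast
    then show ?thesis unfolding absorbed_def by (cases "c 0") auto
  next
    case False
    have "alternating n c" unfolding alternating_def
    proof (intro allI impI)
      fix i assume i: "i < n"
      have m: "(i + 1) mod n < n" using n0 by simp
      have "((i + 1) mod n) mod 2 \<noteq> i mod 2"
      proof (cases "i + 1 < n")
        case True then show ?thesis by simp presburger
      next
        case False then have "i = n - 1" using i by simp
        then show ?thesis using h n0 by simp presburger
      qed
      moreover have "((i + 1) mod n) mod 2 < 2" "i mod 2 < 2" by simp_all
      ultimately have "((i + 1) mod n) mod 2 = 0 \<and> i mod 2 = 1 \<or> ((i + 1) mod n) mod 2 = 1 \<and> i mod 2 = 0"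
        by linarith
      then show "c ((i + 1) mod n) \<noteq> c i" using par[OF m] par[OF i] False by auto
    qed
    then show ?thesis unfolding absorbed_def by simp
  qed
qed

lemma W_sub: assumes "n \<ge> 3" shows "Wset n (allstep n (allstep n c)) \<subseteq> Wset n c"
  using two_step[OF assms] unfolding Wset_def by blast

lemma lemA: assumes "n \<ge> 3"
  shows "\<exists>k \<le> 2 * card (Wset n c). absorbed n ((allstep n ^^ k) c)"
proof (induction c rule: measure_induct_rule[of "\<lambda>c. card (Wset n c)"])
  case (less c)
  let ?c2 = "allstep n (allstep n c)"
  have fin: "finite (Wset n c)" unfolding Wset_def by simp
  show ?case
  proof (cases "Wset n ?c2 = Wset n c")
    case True
    have "\<forall>i<n. c i = White \<longrightarrow> c ((i + 2) mod n) = White"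
    proof (intro allI impI)
      fix i assume i: "i < n" "c i = White"
      then have "i \<in> Wset n ?c2" using True unfolding Wset_def by blast
      then have "?c2 i = White" unfolding Wset_def by simp
      then show "c ((i + 2) mod n) = White" using two_step[OF assms i(1)] sc2[OF assms] by simp
    qed
    then have "absorbed n c" using closure_absorbed[OF assms] by blast
    then show ?thesis by (intro exI[of _ 0]) simp
  next
    case False
    then have ps: "Wset n ?c2 \<subset> Wset n c" using W_sub[OF assms] by blast
    then have lt: "card (Wset n ?c2) < card (Wset n c)" using fin psubset_card_mono by blast
    from less[OF lt] obtain k where k: "k \<le> 2 * card (Wset n ?c2)" "absorbed n ((allstep n ^^ k) ?c2)" by blast
    have "(allstep n ^^ (k + 2)) c = ((allstep n ^^ k) \<circ> (allstep n ^^ 2)) c"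
      by (simp only: funpow_add)
    also have "\<dots> = (allstep n ^^ k) ?c2" by (simp add: numeral_2_eq_2)
    finally have "(allstep n ^^ (k + 2)) c = (allstep n ^^ k) ?c2" .
    moreover have "k + 2 \<le> 2 * card (Wset n c)" using k(1) lt by linarith
    ultimately show ?thesis using k(2) by metis
  qed
qed

lemma lemA': assumes "n \<ge> 3"
  shows "\<exists>k \<le> 2 * n. absorbed n ((allstep n ^^ k) c)"
proof -
  have "Wset n c \<subseteq> {..<n}" unfolding Wset_def by auto
  then have "card (Wset n c) \<le> n" using card_mono[of "{..<n}"] by fastforce
  then show ?thesis using lemA[OF assms, of c] by (meson le_trans mult_le_mono2)
qed

lemma traj_all: assumes "\<forall>s<m. \<forall>i<n. \<omega> (T + s, i)"
  shows "rmm_traj n c \<omega> (T + m) = (allstep n ^^ m) (rmm_traj n c \<omega> T)"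
  using assms
proof (induction m)
  case 0 then show ?case by simp
next
  case (Suc m)
  have "rmm_traj n c \<omega> (T + Suc m) = rmm_step n (rmm_traj n c \<omega> (T + m)) (\<lambda>i. \<omega> (T + m, i))" by simp
  also have "\<dots> = allstep n (rmm_traj n c \<omega> (T + m))" using Suc.prems by (intro rmm_step_all) auto
  also have "\<dots> = allstep n ((allstep n ^^ m) (rmm_traj n c \<omega> T))" using Suc by simp
  finally show ?case by simp
qed



lemma AE_absorb: assumes n3: "n \<ge> 3"
  shows "AE \<omega> in coins. \<exists>t. absorbed n (rmm_traj n c \<omega> t)"
proof -
  define M0 where "M0 = measure_pmf (bernoulli_pmf (1/2::real))"
  interpret P: product_prob_space "\<lambda>_::nat\<times>nat. M0" UNIV
    unfolding M0_def by unfold_locales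
  have cdef: "coins = PiM UNIV (\<lambda>_. M0)" unfolding coins_def M0_def ..
  define L where "L = 2 * n + 1"
  define K where "K k = {k*L..<k*L+L} \<times> (UNIV::nat set)" for k
  define J where "J k = {k*L..<k*L+L} \<times> {..<n}" for k
  define Bad where "Bad k = {\<omega>::nat\<times>nat\<Rightarrow>bool. \<not> (\<forall>j\<in>J k. \<omega> j)}" for k
  define B where "B k = {f \<in> space (PiM (K k) (\<lambda>_. M0)). \<not> (\<forall>j\<in>J k. f j)}" for k
  define p where "p = (1/2::real) ^ (L * n)"
  have sp: "space (PiM UNIV (\<lambda>_::nat\<times>nat. M0)) = UNIV" by (simp add: space_PiM M0_def)
  have finJ: "finite (J k)" for k unfolding J_def by simp
  have cardJ: "card (J k) = L * n" for k unfolding J_def by (simp add: card_cartesian_product)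
  have JK: "J k \<subseteq> K k" for k unfolding J_def K_def by auto
  have Lpos: "L > 0" unfolding L_def by simp
  have disj: "disjoint_family_on K UNIV"
    unfolding disjoint_family_on_def
  proof (intro ballI impI)
    fix k k' :: nat assume "k \<noteq> k'"
    show "K k \<inter> K k' = {}"
    proof (rule ccontr)
      assume "K k \<inter> K k' \<noteq> {}"
      then obtain x where x: "k * L \<le> x" "x < k * L + L" "k' * L \<le> x" "x < k' * L + L"
        unfolding K_def by auto
      have "k * L < Suc k' * L" using x by simp
      then have "k < Suc k'" using mult_less_cancel2 by blast
      moreover have "k' * L < Suc k * L" using x by simp
      then have "k' < Suc k" using mult_less_cancel2 by blast
      ultimately show False using \<open>k \<noteq> k'\<close> by simp
    qed
  qed
  have rv: "(\<lambda>\<omega>. \<omega> i) \<in> measurable (PiM UNIV (\<lambda>_. M0)) M0" for i :: "nat \<times> nat"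
    by (rule measurable_component_singleton) simp
  have dd: "distr (PiM UNIV (\<lambda>_. M0)) (PiM UNIV (\<lambda>_. M0)) (\<lambda>x::nat\<times>nat\<Rightarrow>bool. \<lambda>i\<in>UNIV. x i) =
        PiM UNIV (\<lambda>i. distr (PiM UNIV (\<lambda>_. M0)) M0 (\<lambda>\<omega>. \<omega> i))"
  proof -
    have e: "(\<lambda>i::nat\<times>nat. distr (PiM UNIV (\<lambda>_. M0)) M0 (\<lambda>\<omega>. \<omega> i)) = (\<lambda>_. M0)"
      by (rule ext) (rule P.PiM_component, simp)
    show ?thesis unfolding e by (simp add: restrict_UNIV)
  qed
  have ind0: "P.indep_vars (\<lambda>_. M0) (\<lambda>i \<omega>. \<omega> i) UNIV"
    using P.indep_vars_iff_distr_eq_PiM[where I=UNIV and M'="\<lambda>_. M0" and X="\<lambda>i \<omega>. \<omega> i"] rv dd by simp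
  have ind: "P.indep_vars (\<lambda>k. PiM (K k) (\<lambda>_. M0)) (\<lambda>k \<omega>. restrict (\<lambda>i. \<omega> i) (K k)) UNIV"
    using P.indep_vars_restrict[OF ind0 _ disj] by simp
  have cmp: "(\<lambda>f. f j) \<in> measurable (PiM (K k) (\<lambda>_. M0)) (count_space UNIV)" if "j \<in> K k" for j k
  proof -
    have "(\<lambda>f. f j) \<in> measurable (PiM (K k) (\<lambda>_. M0)) M0" by (rule measurable_component_singleton[OF that])
    moreover have "measurable (PiM (K k) (\<lambda>_. M0)) M0 = measurable (PiM (K k) (\<lambda>_. M0)) (count_space UNIV)"
      by (rule measurable_cong_sets) (simp_all add: M0_def)
    ultimately show ?thesis by simp
  qed
  have Bsets: "B k \<in> sets (PiM (K k) (\<lambda>_. M0))" for k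
  proof -
    have "Measurable.pred (PiM (K k) (\<lambda>_. M0)) (\<lambda>f. \<forall>j\<in>J k. f j)"
    proof (rule pred_intros_finite(3))
      show "finite (J k)" by (rule finJ)
      fix j assume "j \<in> J k"
      then have "j \<in> K k" using JK by blast
      from cmp[OF this] show "Measurable.pred (PiM (K k) (\<lambda>_. M0)) (\<lambda>f. f j)" .
    qed
    then have "Measurable.pred (PiM (K k) (\<lambda>_. M0)) (\<lambda>f. \<not> (\<forall>j\<in>J k. f j))" by measurable
    then show ?thesis unfolding B_def by measurable
  qed
  have pre: "(\<lambda>\<omega>. restrict (\<lambda>i. \<omega> i) (K k)) -` B k \<inter> space (PiM UNIV (\<lambda>_. M0)) = Bad k" for k
    unfolding Bad_def B_def sp using JK by (auto simp: space_PiM M0_def)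
  have Bad_sets: "Bad k \<in> P.events" for k
  proof -
    have "(\<lambda>\<omega>. restrict (\<lambda>i. \<omega> i) (K k)) \<in> measurable (PiM UNIV (\<lambda>_. M0)) (PiM (K k) (\<lambda>_. M0))"
      by (rule measurable_restrict_subset) simp
    from measurable_sets[OF this Bsets] show ?thesis using pre by simp
  qed
  have E: "P.prob (UNIV - Bad k) = p" for k
  proof -
    have "UNIV - Bad k = {x \<in> space (PiM UNIV (\<lambda>_. M0)). \<forall>j\<in>J k. x j \<in> {True}}"
      unfolding Bad_def sp by auto
    then have "emeasure (PiM UNIV (\<lambda>_. M0)) (UNIV - Bad k) = (\<Prod>j\<in>J k. emeasure M0 {True})"
      using P.emeasure_PiM_Collect[of "J k" "\<lambda>_. {True}"] finJ by (simp add: M0_def)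
    also have "\<dots> = (\<Prod>j\<in>J k. ennreal (1/2))" by (simp add: M0_def emeasure_pmf_single)
    also have "\<dots> = ennreal (1/2) ^ (L * n)" by (simp only: prod_constant cardJ)
    also have "\<dots> = ennreal p" unfolding p_def by (rule ennreal_power) simp
    finally have "ennreal (P.prob (UNIV - Bad k)) = ennreal p" by (simp add: P.emeasure_eq_measure)
    then show ?thesis unfolding p_def by simp
  qed
  have BadP: "P.prob (Bad k) = 1 - p" for k
    using P.prob_compl[OF Bad_sets[of k]] E[of k] sp by simp
  have inter: "P.prob (\<Inter>k\<in>{..N}. Bad k) = (1 - p) ^ Suc N" for N
  proof -
    have "P.prob (\<Inter>k\<in>{..N}. (\<lambda>\<omega>. restrict (\<lambda>i. \<omega> i) (K k)) -` B k \<inter> space (PiM UNIV (\<lambda>_. M0)))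
      = (\<Prod>k\<in>{..N}. P.prob ((\<lambda>\<omega>. restrict (\<lambda>i. \<omega> i) (K k)) -` B k \<inter> space (PiM UNIV (\<lambda>_. M0))))"
      by (rule P.indep_varsD[OF ind]) (auto simp: Bsets)
    then show ?thesis unfolding pre BadP by simp
  qed
  define BadAll where "BadAll = (\<Inter>k. Bad k)"
  have BA_sets: "BadAll \<in> P.events" unfolding BadAll_def using Bad_sets by auto
  have p0: "0 < p" "p \<le> 1" unfolding p_def by (simp_all add: power_le_one)
  have le: "P.prob BadAll \<le> (1 - p) ^ Suc N" for N
  proof -
    have "BadAll \<subseteq> (\<Inter>k\<in>{..N}. Bad k)" unfolding BadAll_def by auto
    moreover have "(\<Inter>k\<in>{..N}. Bad k) \<in> P.events" using Bad_sets by auto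
    ultimately show ?thesis using P.finite_measure_mono inter by metis
  qed
  have lim: "(\<lambda>N. (1 - p) ^ Suc N) \<longlonglongrightarrow> 0"
  proof -
    have "(\<lambda>N. (1 - p) ^ N) \<longlonglongrightarrow> 0" using p0 by (intro LIMSEQ_power_zero) simp
    then show ?thesis by (rule LIMSEQ_Suc)
  qed
  have "P.prob BadAll \<le> 0" by (rule LIMSEQ_le_const[OF lim]) (use le in blast)
  then have "P.prob BadAll = 0" using measure_nonneg[of "PiM UNIV (\<lambda>_. M0)" BadAll] by linarith
  then have null: "BadAll \<in> null_sets (PiM UNIV (\<lambda>_. M0))"
    using BA_sets by (simp add: P.emeasure_eq_measure null_sets_def)
  have sub: "{\<omega> \<in> space (PiM UNIV (\<lambda>_. M0)). \<not> (\<exists>t. absorbed n (rmm_traj n c \<omega> t))} \<subseteq> BadAll"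
  proof
    fix \<omega> assume "\<omega> \<in> {\<omega> \<in> space (PiM UNIV (\<lambda>_. M0)). \<not> (\<exists>t. absorbed n (rmm_traj n c \<omega> t))}"
    then have na: "\<not> (\<exists>t. absorbed n (rmm_traj n c \<omega> t))" by simp
    show "\<omega> \<in> BadAll" unfolding BadAll_def
    proof
      fix k assume "k \<in> (UNIV::nat set)"
      show "\<omega> \<in> Bad k"
      proof (rule ccontr)
        assume "\<omega> \<notin> Bad k"
        then have all: "\<forall>j\<in>J k. \<omega> j" unfolding Bad_def by simp
        obtain m where m: "m \<le> 2 * n" "absorbed n ((allstep n ^^ m) (rmm_traj n c \<omega> (k * L)))"
          using lemA'[OF n3] by blast
        have "\<forall>s<m. \<forall>i<n. \<omega> (k * L + s, i)"
        proof (intro allI impI)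
          fix s i assume "s < m" "i < n"
          then have "(k * L + s, i) \<in> J k" unfolding J_def L_def using m(1) by auto
          then show "\<omega> (k * L + s, i)" using all by blast
        qed
        from traj_all[OF this] m(2) na show False by metis
      qed
    qed
  qed
  show ?thesis unfolding cdef by (rule AE_I'[OF null sub])
qed


theorem theorem2p7:
  fixes n :: nat and c :: coloring
  assumes "n \<ge> 3"
  shows "(odd n \<longrightarrow> (\<exists>t. stable n ((mm_step n ^^ t) c)))
       \<and> (even n \<longrightarrow> (\<exists>t. stable n ((mm_step n ^^ t) c) \<or> alternating n ((mm_step n ^^ t) c)))
       \<and> (odd n \<longrightarrow> (AE \<omega> in coins. \<exists>t.
              monochrome n White (rmm_traj n c \<omega> t) \<or> monochrome n Blue (rmm_traj n c \<omega> t)))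
       \<and> (even n \<longrightarrow> (AE \<omega> in coins. \<exists>t.
              monochrome n White (rmm_traj n c \<omega> t) \<or> monochrome n Blue (rmm_traj n c \<omega> t)
              \<or> alternating n (rmm_traj n c \<omega> t)))"
proof -
  have mm: "\<exists>t. stable n ((mm_step n ^^ t) c) \<or> alternating n ((mm_step n ^^ t) c)"
    by (rule mm_main[OF assms])
  have ae: "AE \<omega> in coins. \<exists>t. absorbed n (rmm_traj n c \<omega> t)"
    by (rule AE_absorb[OF assms])
  show ?thesis
  proof (intro conjI impI)
    assume o: "odd n"
    from mm show "\<exists>t. stable n ((mm_step n ^^ t) c)" using alt_odd[OF assms o] by blast
  next
    assume "even n"
    from mm show "\<exists>t. stable n ((mm_step n ^^ t) c) \<or> alternating n ((mm_step n ^^ t) c)" .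
  next
    assume o: "odd n"
    show "AE \<omega> in coins. \<exists>t.
              monochrome n White (rmm_traj n c \<omega> t) \<or> monochrome n Blue (rmm_traj n c \<omega> t)"
      by (rule eventually_mono[OF ae]) (use alt_odd[OF assms o] in \<open>auto simp: absorbed_def\<close>)
  next
    assume "even n"
    show "AE \<omega> in coins. \<exists>t.
              monochrome n White (rmm_traj n c \<omega> t) \<or> monochrome n Blue (rmm_traj n c \<omega> t)
              \<or> alternating n (rmm_traj n c \<omega> t)"
      by (rule eventually_mono[OF ae]) (auto simp: absorbed_def)
  qed
qed

end
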